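(* Let $p,q\geq 2$ be relatively prime integers and $x,y,z,w,a\in A_{pq}$. If $f_{p,q}(x,a,y)=f_{p,q}(z,a,w)$, then $x\equiv z\pmod q$.
   Context: For an integer $n>1$, $A_n=\{0,1,\dots,n-1\}$. Define $g_{p,q}:A_{pq}\times A_{pq}\to A_{pq}$ by writing $x=x_1q+x_0$, $y=y_1q+y_0$ with $x_0,y_0\in A_q$, $x_1,y_1\in A_p$ (uniquely), and setting $g_{p,q}(x,y)=x_0p+y_1$. Define $f_{p,q}:A_{pq}^3\to A_{pq}$ by $f_{p,q}(x,a,y)=g_{p,q}(g_{p,q}(x,a),g_{p,q}(a,y))$. *)

theory Defs
  imports Main "HOL-Number_Theory.Cong"
begin

text \<open>A_n = {0..<n}. For x, y in A_(pq), writing x = x1*q + x0 with x0 in A_q, x1 in A_p,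
  g_(p,q)(x,y) = x0*p + y1, i.e. (x mod q)*p + y div q.\<close>

definition A :: "nat \<Rightarrow> nat set" where
  "A n = {0..<n}"

definition g :: "nat \<Rightarrow> nat \<Rightarrow> nat \<Rightarrow> nat \<Rightarrow> nat" where
  "g p q x y = (x mod q) * p + y div q"

definition f :: "nat \<Rightarrow> nat \<Rightarrow> nat \<Rightarrow> nat \<Rightarrow> nat \<Rightarrow> nat" where
  "f p q x a y = g p q (g p q x a) (g p q a y)"

end

theory Submission
  imports Defs
begin

lemma gdiv:
  fixes p q u a y :: nat
  assumes "p \<ge> 2" "q \<ge> 2" "a < p*q" "y < p*q"
  shows "g p q u (g p q a y) div p = u mod q"
proof -
  have y1: "y div q < p" using assms by (simp add: less_mult_imp_div_less mult.commute)
  have am: "a mod q \<le> q - 1" using assms proof -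
    have "a mod q < q" using assms by simp
    thus ?thesis by linarith
  qed
  have "(a mod q)*p + y div q < q*p"
  proof -
    have "(a mod q)*p \<le> (q-1)*p" using am by simp
    moreover have "(q-1)*p + p = q*p" using assms by (simp add: algebra_simps)
    ultimately show ?thesis using y1 by linarith
  qed
  hence "g p q a y div q < p" unfolding g_def by (metis div_less_iff_less_mult assms(2) le_trans one_le_numeral less_le_trans zero_less_one not_less mult.commute)
  thus ?thesis unfolding g_def using assms by simp
qed

theorem lemma4:
  fixes p q x y z w a :: nat
  assumes "p \<ge> 2" and "q \<ge> 2" and "coprime p q"
    and "x \<in> A (p*q)" and "y \<in> A (p*q)" and "z \<in> A (p*q)"
    and "w \<in> A (p*q)" and "a \<in> A (p*q)"
    and "f p q x a y = f p q z a w"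
  shows "[x = z] (mod q)"
proof -
  have "g p q x a mod q = g p q z a mod q"
    using gdiv[of p q a y "g p q x a"] gdiv[of p q a w "g p q z a"] assms
    unfolding f_def A_def by simp
  hence "[(x mod q)*p + a div q = (z mod q)*p + a div q] (mod q)"
    unfolding g_def cong_def .
  hence "[(x mod q)*p = (z mod q)*p] (mod q)" by (simp add: cong_add_rcancel_nat)
  hence "[x mod q = z mod q] (mod q)"
    using assms(3) by (metis cong_mult_rcancel_nat coprime_commute)
  thus ?thesis by (simp add: cong_def)
qed

end
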